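(* For all positive integers $\ell$ and $d$, the forwarding index of the BCube network satisfies $$\pi(\mathcal{B}(\ell,d)) = d^{\ell}-d^{\ell-1}.$$
   Context: The BCube $\mathcal{B}(\ell,d)$ ($\ell,d$ positive integers) is the symmetric digraph defined as follows, with $\mathbb{Z}_d=\{0,1,\dots,d-1\}$. - Hosts: all vectors $\mathbf{h}=h_1\cdots h_\ell\in\mathbb{Z}_d^{\ell}$. - Switches: for each layer $k\in\{1,\dots,\ell\}$, one switch $\mathbf{s}^k$ for each vector $s^k_1\cdots s^k_{\ell-1}\in\mathbb{Z}_d^{\ell-1}$. Switches of different layers are distinct vertices. - Links: host $\mathbf{h}$ and layer-$k$ switch $\mathbf{s}^k$ are joined if and only if $s^k_1\cdots s^k_{\ell-1}=h_1\cdots h_{k-1}h_{k+1}\cdots h_\ell$. Each such link gives two arcs, an uplink (host $\to$ switch) and a downlink (switch $\to$ host), both said to be at layer $k$. There are no other arcs. A host-to-host routing $R$ assigns to every ordered pair $(\mathbf{h}^s,\mathbf{h}^d)$ of distinct hosts one directed path $P_{\mathbf{h}^s,\mathbf{h}^d}$ from $\mathbf{h}^s$ to $\mathbf{h}^d$ in $\mathcal{B}(\ell,d)$. The load of an arc is the number of paths of $R$ containing it, and $\pi(\mathcal{B}(\ell,d),R)$ is the maximum load over all arcs. The forwarding index $\pi(\mathcal{B}(\ell,d))$ is the minimum of $\pi(\mathcal{B}(\ell,d),R)$ over all host-to-host routings $R$. *)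

theory Defs
  imports Main
begin

text \<open>Vertices of the BCube B(l,d): hosts are vectors in Z_d^l (lists of length l with
  entries < d); a switch of layer k (1 \<le> k \<le> l) is given by its layer and a vector in Z_d^(l-1).\<close>
datatype vertex = Host "nat list" | Switch nat "nat list"

definition hosts :: "nat \<Rightarrow> nat \<Rightarrow> nat list set" where
  "hosts l d = {h. length h = l \<and> set h \<subseteq> {..<d}}"

definition switches :: "nat \<Rightarrow> nat \<Rightarrow> vertex set" where
  "switches l d = {Switch k s | k s. 1 \<le> k \<and> k \<le> l \<and> length s = l - 1 \<and> set s \<subseteq> {..<d}}"

definition linked :: "nat \<Rightarrow> nat \<Rightarrow> nat list \<Rightarrow> nat \<Rightarrow> nat list \<Rightarrow> bool" where
  "linked l d h k s \<longleftrightarrow> h \<in> hosts l d \<and> 1 \<le> k \<and> k \<le> l \<and> Switch k s \<in> switches l d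
     \<and> s = take (k - 1) h @ drop k h"

definition bcube_arcs :: "nat \<Rightarrow> nat \<Rightarrow> (vertex \<times> vertex) set" where
  "bcube_arcs l d =
     {(Host h, Switch k s) | h k s. linked l d h k s} \<union>
     {(Switch k s, Host h) | h k s. linked l d h k s}"

definition is_dpath :: "('v \<times> 'v) set \<Rightarrow> 'v list \<Rightarrow> 'v \<Rightarrow> 'v \<Rightarrow> bool" where
  "is_dpath A p x y \<longleftrightarrow> p \<noteq> [] \<and> hd p = x \<and> last p = y \<and> distinct p \<and>
     (\<forall>i. i + 1 < length p \<longrightarrow> (p ! i, p ! (i + 1)) \<in> A)"

definition path_arcs :: "'v list \<Rightarrow> ('v \<times> 'v) set" where
  "path_arcs p = set (zip p (tl p))"

definition is_routing :: "nat \<Rightarrow> nat \<Rightarrow> (nat list \<Rightarrow> nat list \<Rightarrow> vertex list) \<Rightarrow> bool" where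
  "is_routing l d R \<longleftrightarrow> (\<forall>hs \<in> hosts l d. \<forall>hd \<in> hosts l d. hs \<noteq> hd \<longrightarrow>
      is_dpath (bcube_arcs l d) (R hs hd) (Host hs) (Host hd))"

definition arc_load :: "nat \<Rightarrow> nat \<Rightarrow> (nat list \<Rightarrow> nat list \<Rightarrow> vertex list) \<Rightarrow> vertex \<times> vertex \<Rightarrow> nat" where
  "arc_load l d R a = card {(hs, hd). hs \<in> hosts l d \<and> hd \<in> hosts l d \<and> hs \<noteq> hd \<and>
      a \<in> path_arcs (R hs hd)}"

definition routing_load :: "nat \<Rightarrow> nat \<Rightarrow> (nat list \<Rightarrow> nat list \<Rightarrow> vertex list) \<Rightarrow> nat" where
  "routing_load l d R = Max (arc_load l d R ` bcube_arcs l d)"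

definition forwarding_index :: "nat \<Rightarrow> nat \<Rightarrow> nat" where
  "forwarding_index l d = (LEAST p. \<exists>R. is_routing l d R \<and> routing_load l d R = p)"

end

theory Submission
  imports Defs
begin

lemma hosts_eq: "hosts l d = {xs. set xs \<subseteq> {..<d} \<and> length xs = l}"
  unfolding hosts_def by auto

lemma finite_hosts: "finite (hosts l d)"
  unfolding hosts_eq by (rule finite_lists_length_eq) simp

lemma card_hosts: "card (hosts l d) = d ^ l"
  unfolding hosts_eq by (subst card_lists_length_eq) simp_all

lemma card_hosts_fix:
  assumes "j < l" "c < d"
  shows "card {z \<in> hosts l d. z ! j = c} = d ^ (l - 1)"
proof -
  have "bij_betw (\<lambda>z. take j z @ drop (Suc j) z) {z \<in> hosts l d. z ! j = c} (hosts (l-1) d)"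
  proof (rule bij_betw_byWitness[where f' = "\<lambda>w. take j w @ c # drop j w"])
    show "\<forall>a\<in>{z \<in> hosts l d. z ! j = c}.
       take j (take j a @ drop (Suc j) a) @ c # drop j (take j a @ drop (Suc j) a) = a"
      using assms by (auto simp: hosts_def min_def id_take_nth_drop[symmetric])
    show "\<forall>a'\<in>hosts (l - 1) d. take j (take j a' @ c # drop j a') @ drop (Suc j) (take j a' @ c # drop j a') = a'"
      using assms by (auto simp: hosts_def min_def)
    show "(\<lambda>z. take j z @ drop (Suc j) z) ` {z \<in> hosts l d. z ! j = c} \<subseteq> hosts (l - 1) d"
      using assms by (auto simp: hosts_def dest!: in_set_takeD in_set_dropD)
    show "(\<lambda>w. take j w @ c # drop j w) ` hosts (l - 1) d \<subseteq> {z \<in> hosts l d. z ! j = c}"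
      using assms by (auto simp: hosts_def nth_append min_def dest!: in_set_takeD in_set_dropD)
  qed
  from bij_betw_same_card[OF this] show ?thesis by (simp add: card_hosts)
qed

lemma card_hosts_nfix:
  assumes "j < l" "c < d"
  shows "card {z \<in> hosts l d. z ! j \<noteq> c} = d ^ l - d ^ (l - 1)"
proof -
  have "{z \<in> hosts l d. z ! j \<noteq> c} = hosts l d - {z \<in> hosts l d. z ! j = c}" by auto
  moreover have sub: "{z \<in> hosts l d. z ! j = c} \<subseteq> hosts l d" by auto
  ultimately show ?thesis using card_Diff_subset[OF finite_subset[OF sub finite_hosts] sub]
      card_hosts card_hosts_fix[OF assms] by simp
qed

definition mid :: "nat list \<Rightarrow> nat list \<Rightarrow> nat \<Rightarrow> nat list" where
  "mid x y j = take j y @ drop j x"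

definition sw :: "nat list \<Rightarrow> nat list \<Rightarrow> nat \<Rightarrow> vertex" where
  "sw x y j = Switch (Suc j) (take j y @ drop (Suc j) x)"

fun go :: "nat list \<Rightarrow> nat list \<Rightarrow> nat \<Rightarrow> nat \<Rightarrow> vertex list" where
  "go x y j 0 = []"
| "go x y j (Suc n) = (if x ! j = y ! j then [] else [sw x y j, Host (mid x y (Suc j))]) @ go x y (Suc j) n"

lemma mid_same:
  assumes "j < length x" "length y = length x" "x ! j = y ! j"
  shows "mid x y (Suc j) = mid x y j"
  using assms unfolding mid_def
  by (simp add: take_Suc_conv_app_nth) (metis Cons_nth_drop_Suc)

lemma mid_nth:
  assumes "i < length x" "length y = length x"
  shows "mid x y j ! i = (if i < j then y ! i else x ! i)"
  using assms unfolding mid_def by (auto simp: nth_append min_def)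

lemma length_mid: "length y = length x \<Longrightarrow> length (mid x y j) = length x"
  unfolding mid_def by auto

lemma mid_0: "mid x y 0 = x" unfolding mid_def by simp

lemma mid_full: "length y = length x \<Longrightarrow> mid x y (length x) = y" unfolding mid_def by simp

lemma path_arcs_Cons2: "path_arcs (a # b # r) = insert (a, b) (path_arcs (b # r))"
  unfolding path_arcs_def by simp

lemma path_arcs_single: "path_arcs [a] = {}"
  unfolding path_arcs_def by simp

lemma set_go:
  "v \<in> set (go x y j n) \<Longrightarrow> \<exists>i. j \<le> i \<and> i < j + n \<and> x ! i \<noteq> y ! i \<and>
     (v = sw x y i \<or> v = Host (mid x y (Suc i)))"
proof (induction n arbitrary: j)
  case 0 then show ?case by simp
next
  case (Suc n)
  show ?case
  proof (cases "x ! j = y ! j")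
    case True
    with Suc.prems have "v \<in> set (go x y (Suc j) n)" by simp
    from Suc.IH[OF this] show ?thesis by (metis Suc_leD add_Suc_shift add_Suc_right)
  next
    case False
    with Suc.prems have "v = sw x y j \<or> v = Host (mid x y (Suc j)) \<or> v \<in> set (go x y (Suc j) n)" by auto
    then show ?thesis
    proof (elim disjE)
      assume "v \<in> set (go x y (Suc j) n)"
      from Suc.IH[OF this] show ?thesis by (metis Suc_leD add_Suc_shift add_Suc_right)
    qed (use False in auto)
  qed
qed

lemma arcs_go:
  assumes "j + n \<le> length x" "length y = length x"
    and "a \<in> path_arcs (Host (mid x y j) # go x y j n)"
  shows "\<exists>i. j \<le> i \<and> i < j + n \<and> x ! i \<noteq> y ! i \<and>
     (a = (Host (mid x y i), sw x y i) \<or> a = (sw x y i, Host (mid x y (Suc i))))"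
  using assms
proof (induction n arbitrary: j)
  case 0 then show ?case by (simp add: path_arcs_single)
next
  case (Suc n)
  show ?case
  proof (cases "x ! j = y ! j")
    case True
    with Suc.prems have "a \<in> path_arcs (Host (mid x y (Suc j)) # go x y (Suc j) n)"
      using mid_same[of j x y] by simp
    from Suc.IH[OF _ _ this] Suc.prems show ?thesis by (metis Suc_leD add_Suc_shift add_Suc_right)
  next
    case False
    with Suc.prems have "a = (Host (mid x y j), sw x y j) \<or> a = (sw x y j, Host (mid x y (Suc j)))
       \<or> a \<in> path_arcs (Host (mid x y (Suc j)) # go x y (Suc j) n)" by (auto simp: path_arcs_Cons2)
    then show ?thesis
    proof (elim disjE)
      assume "a \<in> path_arcs (Host (mid x y (Suc j)) # go x y (Suc j) n)"
      from Suc.IH[OF _ _ this] Suc.prems show ?thesis by (metis Suc_leD add_Suc_shift add_Suc_right)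
    qed (use False in auto)
  qed
qed

lemma last_go:
  assumes "j + n \<le> length x" "length y = length x"
  shows "last (Host (mid x y j) # go x y j n) = Host (mid x y (j + n))"
  using assms
proof (induction n arbitrary: j)
  case 0 then show ?case by simp
next
  case (Suc n)
  have IH: "last (Host (mid x y (Suc j)) # go x y (Suc j) n) = Host (mid x y (j + Suc n))"
    using Suc.IH[of "Suc j"] Suc.prems by simp
  show ?case
  proof (cases "x ! j = y ! j")
    case True
    then show ?thesis using IH mid_same[of j x y] Suc.prems by simp
  next
    case False
    then show ?thesis using IH by simp
  qed
qed

lemma distinct_go:
  assumes "j + n \<le> length x" "length y = length x"
  shows "distinct (Host (mid x y j) # go x y j n)"
  using assms
proof (induction n arbitrary: j)
  case 0 then show ?case by simp
next
  case (Suc n)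
  have IH: "distinct (Host (mid x y (Suc j)) # go x y (Suc j) n)"
    using Suc.IH[of "Suc j"] Suc.prems by simp
  show ?case
  proof (cases "x ! j = y ! j")
    case True
    then show ?thesis using IH mid_same[of j x y] Suc.prems by simp
  next
    case False
    have jl: "j < length x" using Suc.prems by simp
    have ne: "mid x y j \<noteq> mid x y (Suc j)"
      using mid_nth[OF jl Suc.prems(2), of j] mid_nth[OF jl Suc.prems(2), of "Suc j"] False by auto
    have n1: "Host (mid x y j) \<notin> set (go x y (Suc j) n)"
    proof
      assume "Host (mid x y j) \<in> set (go x y (Suc j) n)"
      from set_go[OF this] obtain i where i: "Suc j \<le> i" "i < Suc j + n" "x ! i \<noteq> y ! i"
        "mid x y j = mid x y (Suc i)" by (auto simp: sw_def)
      have il: "i < length x" using i Suc.prems by simp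
      show False using mid_nth[OF il Suc.prems(2), of j] mid_nth[OF il Suc.prems(2), of "Suc i"] i by auto
    qed
    have n2: "sw x y j \<notin> set (go x y (Suc j) n)"
    proof
      assume "sw x y j \<in> set (go x y (Suc j) n)"
      from set_go[OF this] show False by (auto simp: sw_def)
    qed
    show ?thesis using False IH ne n1 n2 by (auto simp: sw_def)
  qed
qed

lemma mid_hosts: "x \<in> hosts l d \<Longrightarrow> y \<in> hosts l d \<Longrightarrow> mid x y j \<in> hosts l d"
  unfolding hosts_def mid_def by (auto dest!: in_set_takeD in_set_dropD)

lemma arcs_mid:
  assumes "x \<in> hosts l d" "y \<in> hosts l d" "i < l"
  shows "(Host (mid x y i), sw x y i) \<in> bcube_arcs l d"
    and "(sw x y i, Host (mid x y (Suc i))) \<in> bcube_arcs l d"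
proof -
  have sws: "Switch (Suc i) (take i y @ drop (Suc i) x) \<in> switches l d"
    using assms unfolding switches_def hosts_def by (auto dest!: in_set_takeD in_set_dropD)
  have len: "length x = l" "length y = l" using assms unfolding hosts_def by auto
  have "linked l d (mid x y i) (Suc i) (take i y @ drop (Suc i) x)"
    unfolding linked_def using sws mid_hosts[OF assms(1,2)] assms(3) len
    by (auto simp: mid_def min_def)
  then show "(Host (mid x y i), sw x y i) \<in> bcube_arcs l d"
    unfolding bcube_arcs_def sw_def by blast
  have "linked l d (mid x y (Suc i)) (Suc i) (take i y @ drop (Suc i) x)"
    unfolding linked_def using sws mid_hosts[OF assms(1,2)] assms(3) len
    by (auto simp: mid_def min_def)
  then show "(sw x y i, Host (mid x y (Suc i))) \<in> bcube_arcs l d"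
    unfolding bcube_arcs_def sw_def by blast
qed

lemma path_arcs_nth: "i + 1 < length p \<Longrightarrow> (p ! i, p ! (i + 1)) \<in> path_arcs p"
  unfolding path_arcs_def
proof -
  assume a: "i + 1 < length p"
  have "zip p (tl p) ! i = (p ! i, p ! (i + 1))" using a by (simp add: nth_tl)
  moreover have "i < length (zip p (tl p))" using a by simp
  ultimately show "(p ! i, p ! (i + 1)) \<in> set (zip p (tl p))" by (metis nth_mem)
qed

lemma path_arcs_sub: "path_arcs p \<subseteq> A \<Longrightarrow> i + 1 < length p \<Longrightarrow> (p ! i, p ! (i + 1)) \<in> A"
  using path_arcs_nth by blast

definition route :: "nat \<Rightarrow> nat list \<Rightarrow> nat list \<Rightarrow> vertex list" where
  "route l x y = Host x # go x y 0 l"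

lemma route_routing: "is_routing l d (route l)"
  unfolding is_routing_def
proof (intro ballI impI)
  fix x y assume x: "x \<in> hosts l d" and y: "y \<in> hosts l d" and "x \<noteq> y"
  have len: "length x = l" "length y = l" using x y unfolding hosts_def by auto
  have r: "route l x y = Host (mid x y 0) # go x y 0 l" by (simp add: route_def mid_0)
  have "path_arcs (route l x y) \<subseteq> bcube_arcs l d"
  proof
    fix a assume "a \<in> path_arcs (route l x y)"
    from arcs_go[of 0 l x y a] this r len obtain i where "i < l"
      "a = (Host (mid x y i), sw x y i) \<or> a = (sw x y i, Host (mid x y (Suc i)))" by auto
    then show "a \<in> bcube_arcs l d" using arcs_mid[OF x y] by auto
  qed
  moreover have "last (route l x y) = Host y"
    using r last_go[of 0 l x y] len mid_full[of y x] by simp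
  moreover have "distinct (route l x y)" using r distinct_go[of 0 l x y] len by simp
  moreover have "\<forall>i. i + 1 < length (route l x y) \<longrightarrow>
      (route l x y ! i, route l x y ! (i + 1)) \<in> bcube_arcs l d"
    using path_arcs_sub calculation(1) by blast
  moreover have "route l x y \<noteq> []" "List.hd (route l x y) = Host x" by (simp_all add: route_def)
  ultimately show "is_dpath (bcube_arcs l d) (route l x y) (Host x) (Host y)"
    unfolding is_dpath_def by blast
qed

lemma mid_recover:
  assumes "length y = length x" "j \<le> length x"
  shows "take j (mid y x j) @ drop j (mid x y j) = x"
  using assms unfolding mid_def by (simp add: min_def)

lemma route_arc:
  assumes "x \<in> hosts l d" "y \<in> hosts l d" "a \<in> path_arcs (route l x y)"
  shows "\<exists>i<l. x ! i \<noteq> y ! i \<and>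
     (a = (Host (mid x y i), sw x y i) \<or> a = (sw x y i, Host (mid x y (Suc i))))"
proof -
  have len: "length x = l" "length y = l" using assms unfolding hosts_def by auto
  have r: "route l x y = Host (mid x y 0) # go x y 0 l" by (simp add: route_def mid_0)
  show ?thesis using arcs_go[of 0 l x y a] assms(3) r len by auto
qed

lemma load_up:
  assumes "linked l d h k s"
  shows "arc_load l d (route l) (Host h, Switch k s) \<le> d ^ l - d ^ (l - 1)"
proof -
  let ?j = "k - 1"
  define S where "S = {(x, y). x \<in> hosts l d \<and> y \<in> hosts l d \<and> x \<noteq> y \<and>
      (Host h, Switch k s) \<in> path_arcs (route l x y)}"
  have hk: "h \<in> hosts l d" "1 \<le> k" "k \<le> l" using assms unfolding linked_def by auto
  have jl: "?j < l" using hk by simp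
  have hj: "h ! ?j < d" using hk jl unfolding hosts_def by (auto intro!: subsetD[of "set h" "{..<d}", simplified] nth_mem)
  have char: "x \<in> hosts l d \<and> y \<in> hosts l d \<and> x ! ?j \<noteq> y ! ?j \<and> h = mid x y ?j"
    if "(x, y) \<in> S" for x y
  proof -
    from that have xy: "x \<in> hosts l d" "y \<in> hosts l d"
      "(Host h, Switch k s) \<in> path_arcs (route l x y)" unfolding S_def by auto
    from route_arc[OF xy] obtain i where "i < l" "x ! i \<noteq> y ! i"
      "(Host h, Switch k s) = (Host (mid x y i), sw x y i)" by (auto simp: sw_def)
    then show ?thesis using xy by (auto simp: sw_def)
  qed
  define f where "f = (\<lambda>(x, y). mid y x ?j)"
  have inj: "inj_on f S"
  proof (rule inj_onI)
    fix p q assume p: "p \<in> S" and q: "q \<in> S" and e: "f p = f q"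
    obtain x y where pxy: "p = (x, y)" by (cases p)
    obtain x' y' where qxy: "q = (x', y')" by (cases q)
    have c1: "x \<in> hosts l d \<and> y \<in> hosts l d \<and> x ! ?j \<noteq> y ! ?j \<and> h = mid x y ?j"
      using char p pxy by blast
    have c2: "x' \<in> hosts l d \<and> y' \<in> hosts l d \<and> x' ! ?j \<noteq> y' ! ?j \<and> h = mid x' y' ?j"
      using char q qxy by blast
    have e': "mid y x ?j = mid y' x' ?j" using e pxy qxy f_def by simp
    have l1: "length x = l" "length y = l" "length x' = l" "length y' = l"
      using c1 c2 unfolding hosts_def by auto
    have "x = x'"
      using mid_recover[of y x ?j] mid_recover[of y' x' ?j] l1 jl c1 c2 e' by simp
    moreover have "y = y'"
      using mid_recover[of x y ?j] mid_recover[of x' y' ?j] l1 jl c1 c2 e' by simp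
    ultimately show "p = q" using pxy qxy by simp
  qed
  have img: "f ` S \<subseteq> {z \<in> hosts l d. z ! ?j \<noteq> h ! ?j}"
  proof
    fix z assume "z \<in> f ` S"
    then obtain x y where xy: "(x, y) \<in> S" and z: "z = mid y x ?j" unfolding f_def by auto
    have c1: "x \<in> hosts l d \<and> y \<in> hosts l d \<and> x ! ?j \<noteq> y ! ?j \<and> h = mid x y ?j"
      using char xy by blast
    have l1: "length x = l" "length y = l" using c1 unfolding hosts_def by auto
    have "z ! ?j = y ! ?j" using z mid_nth[of ?j y x ?j] l1 jl by simp
    moreover have "h ! ?j = x ! ?j" using c1 mid_nth[of ?j x y ?j] l1 jl by simp
    ultimately show "z \<in> {z \<in> hosts l d. z ! ?j \<noteq> h ! ?j}"
      using c1 z mid_hosts by auto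
  qed
  have "card S \<le> card {z \<in> hosts l d. z ! ?j \<noteq> h ! ?j}"
    using card_inj_on_le[OF inj img] finite_hosts by simp
  then show ?thesis unfolding arc_load_def S_def[symmetric] using card_hosts_nfix[OF jl hj] by simp
qed

lemma load_down:
  assumes "linked l d h k s"
  shows "arc_load l d (route l) (Switch k s, Host h) \<le> d ^ l - d ^ (l - 1)"
proof -
  let ?j = "k - 1"
  define S where "S = {(x, y). x \<in> hosts l d \<and> y \<in> hosts l d \<and> x \<noteq> y \<and>
      (Switch k s, Host h) \<in> path_arcs (route l x y)}"
  have hk: "h \<in> hosts l d" "1 \<le> k" "k \<le> l" using assms unfolding linked_def by auto
  have jl: "?j < l" using hk by simp
  have sj: "Suc ?j = k" using hk by simp
  have hj: "h ! ?j < d" using hk jl unfolding hosts_def by (auto intro!: subsetD[of "set h" "{..<d}", simplified] nth_mem)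
  have char: "x \<in> hosts l d \<and> y \<in> hosts l d \<and> x ! ?j \<noteq> y ! ?j \<and> h = mid x y k"
    if "(x, y) \<in> S" for x y
  proof -
    from that have xy: "x \<in> hosts l d" "y \<in> hosts l d"
      "(Switch k s, Host h) \<in> path_arcs (route l x y)" unfolding S_def by auto
    from route_arc[OF xy] obtain i where "i < l" "x ! i \<noteq> y ! i"
      "(Switch k s, Host h) = (sw x y i, Host (mid x y (Suc i)))" by (auto simp: sw_def)
    then show ?thesis using xy by (auto simp: sw_def)
  qed
  define f where "f = (\<lambda>(x, y). mid y x k)"
  have inj: "inj_on f S"
  proof (rule inj_onI)
    fix p q assume p: "p \<in> S" and q: "q \<in> S" and e: "f p = f q"
    obtain x y where pxy: "p = (x, y)" by (cases p)
    obtain x' y' where qxy: "q = (x', y')" by (cases q)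
    have c1: "x \<in> hosts l d \<and> y \<in> hosts l d \<and> x ! ?j \<noteq> y ! ?j \<and> h = mid x y k"
      using char p pxy by blast
    have c2: "x' \<in> hosts l d \<and> y' \<in> hosts l d \<and> x' ! ?j \<noteq> y' ! ?j \<and> h = mid x' y' k"
      using char q qxy by blast
    have e': "mid y x k = mid y' x' k" using e pxy qxy f_def by simp
    have l1: "length x = l" "length y = l" "length x' = l" "length y' = l"
      using c1 c2 unfolding hosts_def by auto
    have "x = x'"
      using mid_recover[of y x k] mid_recover[of y' x' k] l1 hk c1 c2 e' by simp
    moreover have "y = y'"
      using mid_recover[of x y k] mid_recover[of x' y' k] l1 hk c1 c2 e' by simp
    ultimately show "p = q" using pxy qxy by simp
  qed
  have img: "f ` S \<subseteq> {z \<in> hosts l d. z ! ?j \<noteq> h ! ?j}"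
  proof
    fix z assume "z \<in> f ` S"
    then obtain x y where xy: "(x, y) \<in> S" and z: "z = mid y x k" unfolding f_def by auto
    have c1: "x \<in> hosts l d \<and> y \<in> hosts l d \<and> x ! ?j \<noteq> y ! ?j \<and> h = mid x y k"
      using char xy by blast
    have l1: "length x = l" "length y = l" using c1 unfolding hosts_def by auto
    have "z ! ?j = x ! ?j" using z mid_nth[of ?j y x k] l1 jl hk by simp
    moreover have "h ! ?j = y ! ?j" using c1 mid_nth[of ?j x y k] l1 jl hk by simp
    ultimately show "z \<in> {z \<in> hosts l d. z ! ?j \<noteq> h ! ?j}"
      using c1 z mid_hosts by auto
  qed
  have "card S \<le> card {z \<in> hosts l d. z ! ?j \<noteq> h ! ?j}"
    using card_inj_on_le[OF inj img] finite_hosts by simp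
  then show ?thesis unfolding arc_load_def S_def[symmetric] using card_hosts_nfix[OF jl hj] by simp
qed

lemma arc_up_iff: "(Host h, Switch k s) \<in> bcube_arcs l d \<longleftrightarrow> linked l d h k s"
  unfolding bcube_arcs_def by auto

lemma arc_down_iff: "(Switch k s, Host h) \<in> bcube_arcs l d \<longleftrightarrow> linked l d h k s"
  unfolding bcube_arcs_def by auto

lemma arc_hh: "(Host h, Host h') \<notin> bcube_arcs l d"
  unfolding bcube_arcs_def by auto

lemma arc_ss: "(Switch k s, Switch k' s') \<notin> bcube_arcs l d"
  unfolding bcube_arcs_def by auto

lemma linked_first:
  assumes "linked l d h k s" "2 \<le> k"
  shows "s ! 0 = h ! 0"
proof -
  have "length h = l" "k \<le> l" "s = take (k - 1) h @ drop k h"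
    using assms unfolding linked_def hosts_def by auto
  then show ?thesis using assms(2) by (simp add: nth_append)
qed

fun inv0 :: "nat \<Rightarrow> vertex \<Rightarrow> bool" where
  "inv0 c (Host z) = (z ! 0 = c)"
| "inv0 c (Switch k s) = (2 \<le> k \<and> s ! 0 = c)"

lemma must_use_layer1:
  assumes "is_dpath (bcube_arcs l d) p (Host x) (Host y)" "x ! 0 \<noteq> y ! 0"
  shows "\<exists>h s. (Host h, Switch 1 s) \<in> path_arcs p \<and> linked l d h 1 s"
proof (rule ccontr)
  assume no: "\<not> ?thesis"
  have p: "p \<noteq> []" "List.hd p = Host x" "last p = Host y"
    "\<And>i. i + 1 < length p \<Longrightarrow> (p ! i, p ! (i + 1)) \<in> bcube_arcs l d"
    using assms(1) unfolding is_dpath_def by auto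
  have "i < length p \<Longrightarrow> inv0 (x ! 0) (p ! i)" for i
  proof (induction i)
    case 0 then show ?case using p by (cases p) auto
  next
    case (Suc i)
    then have IH: "inv0 (x ! 0) (p ! i)" by simp
    have arc: "(p ! i, p ! (i + 1)) \<in> bcube_arcs l d" using p(4) Suc.prems by simp
    have inpa: "(p ! i, p ! (i + 1)) \<in> path_arcs p" using path_arcs_nth Suc.prems by simp
    show ?case
    proof (cases "p ! i")
      case (Host z)
      show ?thesis
      proof (cases "p ! (i + 1)")
        case (Host z') then show ?thesis using arc \<open>p ! i = Host z\<close> arc_hh by auto
      next
        case (Switch k s)
        have lk: "linked l d z k s" using arc Host Switch arc_up_iff by auto
        have "k \<noteq> 1" using no inpa Host Switch lk by auto
        moreover have "1 \<le> k" using lk unfolding linked_def by auto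
        ultimately have "2 \<le> k" by simp
        then show ?thesis using linked_first[OF lk] IH Host Switch by simp
      qed
    next
      case (Switch k s)
      show ?thesis
      proof (cases "p ! (i + 1)")
        case (Switch k' s') then show ?thesis using arc \<open>p ! i = Switch k s\<close> arc_ss by auto
      next
        case (Host z)
        have lk: "linked l d z k s" using arc Host Switch arc_down_iff by auto
        then show ?thesis using linked_first[OF lk] IH Host Switch by simp
      qed
    qed
  qed
  then have "inv0 (x ! 0) (p ! (length p - 1))" using p(1) by simp
  moreover have "p ! (length p - 1) = Host y" using p(1,3) by (simp add: last_conv_nth)
  ultimately show False using assms(2) by simp
qed

lemma finite_arcs: "finite (bcube_arcs l d)"
proof -
  let ?sv = "\<lambda>h k. Switch k (take (k - 1) h @ drop k h)"
  have "bcube_arcs l d \<subseteq> (\<lambda>(h, k). (Host h, ?sv h k)) ` (hosts l d \<times> {1..l}) \<union>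
      (\<lambda>(h, k). (?sv h k, Host h)) ` (hosts l d \<times> {1..l})"
    unfolding bcube_arcs_def linked_def by force
  moreover have "finite ((\<lambda>(h, k). (Host h, ?sv h k)) ` (hosts l d \<times> {1..l}) \<union>
      (\<lambda>(h, k). (?sv h k, Host h)) ` (hosts l d \<times> {1..l}))"
    using finite_hosts by auto
  ultimately show ?thesis by (rule finite_subset)
qed

lemma arcs_nonempty:
  assumes "1 \<le> l" "1 \<le> d"
  shows "bcube_arcs l d \<noteq> {}"
proof -
  let ?h = "replicate l (0::nat)"
  have "linked l d ?h 1 (drop 1 ?h)"
    unfolding linked_def hosts_def switches_def using assms by auto
  then show ?thesis using arc_up_iff by blast
qed

lemma upper:
  assumes "1 \<le> l" "1 \<le> d"
  shows "routing_load l d (route l) \<le> d ^ l - d ^ (l - 1)"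
  unfolding routing_load_def
proof (subst Max_le_iff)
  show "finite (arc_load l d (route l) ` bcube_arcs l d)" using finite_arcs by simp
  show "arc_load l d (route l) ` bcube_arcs l d \<noteq> {}" using arcs_nonempty[OF assms] by simp
  show "\<forall>a\<in>arc_load l d (route l) ` bcube_arcs l d. a \<le> d ^ l - d ^ (l - 1)"
  proof
    fix v assume "v \<in> arc_load l d (route l) ` bcube_arcs l d"
    then obtain a where a: "a \<in> bcube_arcs l d" and v: "v = arc_load l d (route l) a" by auto
    from a show "v \<le> d ^ l - d ^ (l - 1)" unfolding bcube_arcs_def
      using load_up load_down v by auto
  qed
qed

lemma lower:
  assumes "1 \<le> l" "1 \<le> d" "is_routing l d R"
  shows "d ^ l - d ^ (l - 1) \<le> routing_load l d R"
proof -
  let ?H = "hosts l d"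
  let ?B = "d ^ l - d ^ (l - 1)"
  let ?M = "routing_load l d R"
  define P where "P = {(x, y). x \<in> ?H \<and> y \<in> ?H \<and> x ! 0 \<noteq> y ! 0}"
  define S where "S = (\<lambda>h. {(x, y). x \<in> ?H \<and> y \<in> ?H \<and> x \<noteq> y \<and>
      (Host h, Switch 1 (drop 1 h)) \<in> path_arcs (R x y)})"
  have sub: "P \<subseteq> (\<Union>h\<in>?H. S h)"
  proof
    fix q assume "q \<in> P"
    then obtain x y where q: "q = (x, y)" and xy: "x \<in> ?H" "y \<in> ?H" "x ! 0 \<noteq> y ! 0"
      unfolding P_def by auto
    have "x \<noteq> y" using xy by auto
    then have "is_dpath (bcube_arcs l d) (R x y) (Host x) (Host y)"
      using assms(3) xy unfolding is_routing_def by auto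
    from must_use_layer1[OF this xy(3)] obtain h s where
      hs: "(Host h, Switch 1 s) \<in> path_arcs (R x y)" "linked l d h 1 s" by auto
    have "h \<in> ?H" "s = drop 1 h" using hs(2) unfolding linked_def by auto
    then show "q \<in> (\<Union>h\<in>?H. S h)" using hs q xy \<open>x \<noteq> y\<close> unfolding S_def by auto
  qed
  have finU: "finite (\<Union>h\<in>?H. S h)"
    by (rule finite_subset[of _ "?H \<times> ?H"]) (auto simp: S_def finite_hosts)
  have "card P \<le> card (\<Union>h\<in>?H. S h)" using card_mono[OF finU sub] .
  also have "\<dots> \<le> (\<Sum>h\<in>?H. card (S h))" using card_UN_le[OF finite_hosts] by blast
  also have "\<dots> \<le> card ?H * ?M"
  proof (rule sum_bounded_above[where K = "?M", simplified])
    fix h assume h: "h \<in> ?H"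
    have "linked l d h 1 (drop 1 h)"
      using h assms unfolding linked_def switches_def hosts_def by (auto dest!: in_set_dropD)
    then have a: "(Host h, Switch 1 (drop 1 h)) \<in> bcube_arcs l d" using arc_up_iff by blast
    have "card (S h) = arc_load l d R (Host h, Switch 1 (drop 1 h))"
      unfolding S_def arc_load_def by simp
    also have "\<dots> \<le> ?M" unfolding routing_load_def
      using finite_arcs a by (intro Max_ge) auto
    finally show "card (S h) \<le> ?M" .
  qed
  finally have le: "card P \<le> card ?H * ?M" .
  have "P = Sigma ?H (\<lambda>x. {y \<in> ?H. y ! 0 \<noteq> x ! 0})" unfolding P_def by auto
  then have "card P = (\<Sum>x\<in>?H. card {y \<in> ?H. y ! 0 \<noteq> x ! 0})"
    using finite_hosts by simp
  also have "\<dots> = (\<Sum>x\<in>?H. ?B)"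
  proof (rule sum.cong)
    fix x assume "x \<in> ?H"
    then have "x ! 0 < d" using assms(1) unfolding hosts_def by (auto intro!: subsetD[of "set x" "{..<d}", simplified] nth_mem)
    then show "card {y \<in> ?H. y ! 0 \<noteq> x ! 0} = ?B" using card_hosts_nfix[of 0 l "x ! 0" d] assms by simp
  qed simp
  finally have "card ?H * ?B \<le> card ?H * ?M" using le by simp
  moreover have "card ?H > 0" using card_hosts[of l d] assms by simp
  ultimately show ?thesis by simp
qed

theorem theorem1:
  fixes l d :: nat
  assumes "l \<ge> 1" and "d \<ge> 1"
  shows "forwarding_index l d = d ^ l - d ^ (l - 1)"
  unfolding forwarding_index_def
proof (rule Least_equality)
  have "routing_load l d (route l) = d ^ l - d ^ (l - 1)"
    using upper[OF assms] lower[OF assms route_routing] by simp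
  then show "\<exists>R. is_routing l d R \<and> routing_load l d R = d ^ l - d ^ (l - 1)"
    using route_routing by blast
next
  fix p assume "\<exists>R. is_routing l d R \<and> routing_load l d R = p"
  then show "d ^ l - d ^ (l - 1) \<le> p" using lower[OF assms] by blast
qed

end
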